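(* Let $u\in V$ satisfy $\operatorname{dist}(u,\mathcal M)\le\varepsilon_{model}$. Let $w=P_Wu+\eta$ with $\eta\in W$ and $\|\eta\|\le\varepsilon_{noise}$. Let $(u^*,y^* )\in(w+W^\perp)\times Y$ be a global minimizer of $(v,y)\mapsto\mathcal R(v,y)$ over $(w+W^\perp)\times Y$. Then, with $\varepsilon:=\kappa(\varepsilon_{model}+\varepsilon_{noise})$ and $\kappa=R/r$, $$\|u^*-u(y^* )\|\le\varepsilon\qquad\text{and}\qquad\|u-u^*\|\le\varepsilon_{noise}+\delta_\varepsilon\le2\delta_\varepsilon.$$ In particular, if $u\in\mathcal M$ and $\eta=0$, then $\|u-u^*\|\le\delta_0$.
   Context: Let $V$ and $Z$ be real Hilbert spaces, with $\|\cdot\|$ the norm of $V$ and $Z'$ the dual of $Z$. Let $Y\subset\mathbb R^d$ be compact. For $y\in Y$ let $A(y):V\to Z'$ be a bounded linear isomorphism and $f(y)\in Z'$, with $y\mapsto A(y)$ and $y\mapsto f(y)$ continuous. Assume there are constants $0<r\le R$ such that $\|A(y)\|_{V\to Z'}\le R$ and $\|A(y)^{-1}\|_{Z'\to V}\le r^{-1}$ for all $y\in Y$. Let $u(y)=A(y)^{-1}f(y)$ and $\mathcal M=\{u(y):y\in Y\}$. Define the residual $\mathcal R(v,y)=\|A(y)v-f(y)\|_{Z'}$. Let $W\subset V$ be a subspace of finite dimension $m$, let $P_W$ be the orthogonal projection onto $W$, and let $W^\perp$ be its orthogonal complement. Assume $W^\perp\ne\{0\}$. For $\sigma\ge0$ define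 $\mathcal M_\sigma=\{v:\operatorname{dist}(v,\mathcal M)\le\sigma\}$ and $\delta_\sigma=\sup\{\|u-v\|:u,v\in\mathcal M_\sigma,u-v\in W^\perp\}$. *)

theory Defs
  imports "HOL-Analysis.Analysis"
begin

definition orth_proj :: "'v::real_inner set \<Rightarrow> 'v \<Rightarrow> 'v" where
  "orth_proj W u = (THE p. p \<in> W \<and> u - p \<in> orthogonal_comp W)"

definition nbhd_set :: "'v::real_normed_vector set \<Rightarrow> real \<Rightarrow> 'v set" where
  "nbhd_set M \<sigma> = {v. infdist v M \<le> \<sigma>}"

definition delta_sigma :: "'v::real_inner set \<Rightarrow> 'v set \<Rightarrow> real \<Rightarrow> real" where
  "delta_sigma M W \<sigma> = Sup {norm (u - v) | u v. u \<in> nbhd_set M \<sigma> \<and> v \<in> nbhd_set M \<sigma>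
                                    \<and> u - v \<in> orthogonal_comp W}"

end

theory Submission
  imports Defs
begin

lemma proj_exists_fin:
  fixes B :: "'v::real_inner set"
  assumes "finite B"
  shows "\<exists>p\<in>span B. \<forall>x\<in>B. inner (u - p) x = 0"
  using assms
proof (induction B arbitrary: u)
  case empty then show ?case by (auto intro: span_zero)
next
  case (insert b B)
  obtain p where p: "p \<in> span B" "\<forall>x\<in>B. inner (u - p) x = 0" using insert.IH by blast
  obtain q where q: "q \<in> span B" "\<forall>x\<in>B. inner (b - q) x = 0" using insert.IH by blast
  define b' where "b' = b - q"
  define c where "c = inner b' (u - p) / inner b' b'"
  define p' where "p' = p + c *\<^sub>R b'"
  have sub: "span B \<subseteq> span (insert b B)" by (simp add: span_mono subset_insertI)
  have "p' \<in> span (insert b B)"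
    unfolding p'_def b'_def
    by (meson p(1) q(1) span_add span_diff span_mul span_base insertI1 sub subsetD)
  moreover have "\<forall>x\<in>insert b B. inner (u - p') x = 0"
  proof
    fix x assume x: "x \<in> insert b B"
    have bB: "inner b' y = 0" if "y \<in> B" for y using q that by (simp add: b'_def)
    have orthB: "inner (u - p') y = 0" if "y \<in> B" for y
      using p(2) that bB by (simp add: p'_def inner_diff_left inner_add_left algebra_simps)
    have orthspan: "inner (u - p') y = 0" if "y \<in> span B" for y
      using that
    proof (induction rule: span_induct)
      case base show ?case by (simp add: subspace_def inner_add_right)
    next
      case (step y) then show ?case using orthB by simp
    qed
    have orthb': "inner (u - p') b' = 0"
    proof (cases "b' = 0")
      case True then show ?thesis by simp
    next
      case False
      then have "inner b' b' \<noteq> 0" by simp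
      have e1: "inner (u - p') b' = inner (u - p) b' - c * inner b' b'"
        by (simp add: p'_def algebra_simps inner_diff_left inner_add_left)
      have e2: "c * inner b' b' = inner (u - p) b'"
        using \<open>inner b' b' \<noteq> 0\<close> by (simp add: c_def inner_commute)
      show ?thesis using e1 e2 by simp
    qed
    have "b = q + b'" by (simp add: b'_def)
    then have "inner (u - p') b = 0"
      using orthspan[OF q(1)] orthb' by (simp add: inner_add_right)
    with x orthB show "inner (u - p') x = 0" by auto
  qed
  ultimately show ?case by blast
qed


lemma orth_proj_props:
  fixes W :: "'v::real_inner set"
  assumes "subspace W" "\<exists>B. finite B \<and> span B = W"
  shows "orth_proj W u \<in> W \<and> u - orth_proj W u \<in> orthogonal_comp W"
proof -
  obtain B where B: "finite B" "span B = W" using assms(2) by blast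
  obtain p where p: "p \<in> span B" "\<forall>x\<in>B. inner (u - p) x = 0"
    using proj_exists_fin[OF B(1)] by blast
  have pperp: "u - p \<in> orthogonal_comp W"
    unfolding orthogonal_comp_def mem_Collect_eq
  proof
    fix y assume "y \<in> W"
    then have "y \<in> span B" using B by simp
    then show "orthogonal y (u - p)"
      by (metis orthogonal_to_span orthogonal_def orthogonal_commute p(2))
  qed
  have ex: "\<exists>!p. p \<in> W \<and> u - p \<in> orthogonal_comp W"
  proof (rule ex1I[of _ p])
    show "p \<in> W \<and> u - p \<in> orthogonal_comp W" using p B pperp by simp
  next
    fix p' assume p': "p' \<in> W \<and> u - p' \<in> orthogonal_comp W"
    have "p - p' \<in> W" using p' p B assms(1) by (metis subspace_diff)
    moreover have "p - p' \<in> orthogonal_comp W"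
    proof -
      have "(u - p') - (u - p) \<in> orthogonal_comp W"
        using p' pperp subspace_orthogonal_comp by (metis subspace_diff)
      then show ?thesis by simp
    qed
    ultimately have "inner (p - p') (p - p') = 0"
      unfolding orthogonal_comp_def orthogonal_def by blast
    then show "p' = p" by simp
  qed
  show ?thesis unfolding orth_proj_def using theI'[OF ex] by blast
qed

lemma infdist_approx:
  fixes M :: "'v::real_normed_vector set"
  assumes "M \<noteq> {}" "infdist x M \<le> e" "0 < d"
  shows "\<exists>m\<in>M. dist x m < e + d"
proof -
  have "infdist x M < e + d" using assms by linarith
  then have lt: "(INF a\<in>M. dist x a) < e + d" using infdist_notempty[OF assms(1), of x] by simp
  have bdd: "bdd_below ((\<lambda>a. dist x a) ` M)" by (rule bdd_belowI2[of _ 0]) simp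
  show ?thesis by (rule iffD1[OF cINF_less_iff[OF assms(1) bdd] lt])
qed

theorem mainTheorem8:
  fixes Y :: "(real ^ 'd) set"
    and A :: "real ^ 'd \<Rightarrow> ('v::{real_inner, complete_space} \<Rightarrow>\<^sub>L 'z::{real_inner, complete_space})"
    and f :: "real ^ 'd \<Rightarrow> 'z"
    and r R :: real
    and W :: "'v set" and m :: nat
    and u ustar w \<eta> :: 'v and ystar :: "real ^ 'd"
    and eps_model eps_noise :: real
  assumes Y_compact: "compact Y"
    and A_cont: "continuous_on Y A"
    and f_cont: "continuous_on Y f"
    and A_bij: "\<And>y. y \<in> Y \<Longrightarrow> bij (blinfun_apply (A y))"
    and A_inv_bl: "\<And>y. y \<in> Y \<Longrightarrow> bounded_linear (inv (blinfun_apply (A y)))"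
    and r_pos: "0 < r" and rR: "r \<le> R"
    and A_bound: "\<And>y. y \<in> Y \<Longrightarrow> norm (A y) \<le> R"
    and A_inv_bound: "\<And>y. y \<in> Y \<Longrightarrow> onorm (inv (blinfun_apply (A y))) \<le> 1 / r"
    and W_sub: "subspace W"
    and W_fin: "\<exists>B. finite B \<and> span B = W"
    and W_dim: "dim W = m"
    and W_perp_nontriv: "orthogonal_comp W \<noteq> {0}"
    and u_close: "infdist u ((\<lambda>y. inv (blinfun_apply (A y)) (f y)) ` Y) \<le> eps_model"
    and eta_W: "\<eta> \<in> W" and eta_small: "norm \<eta> \<le> eps_noise"
    and w_def: "w = orth_proj W u + \<eta>"
    and ustar_aff: "ustar - w \<in> orthogonal_comp W" and ystar_Y: "ystar \<in> Y"
    and minimizer: "\<And>v y. v - w \<in> orthogonal_comp W \<Longrightarrow> y \<in> Y \<Longrightarrow>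
        norm (A ystar ustar - f ystar) \<le> norm (A y v - f y)"
  shows "(let uy = (\<lambda>y. inv (blinfun_apply (A y)) (f y));
              M = uy ` Y;
              \<epsilon> = (R / r) * (eps_model + eps_noise)
          in norm (ustar - uy ystar) \<le> \<epsilon>
           \<and> norm (u - ustar) \<le> eps_noise + delta_sigma M W \<epsilon>
           \<and> eps_noise + delta_sigma M W \<epsilon> \<le> 2 * delta_sigma M W \<epsilon>
           \<and> (u \<in> M \<and> \<eta> = 0 \<longrightarrow> norm (u - ustar) \<le> delta_sigma M W 0))"
  proof -
  define uy where "uy = (\<lambda>y. inv (blinfun_apply (A y)) (f y))"
  define M where "M = uy ` Y"
  define \<epsilon> where "\<epsilon> = (R / r) * (eps_model + eps_noise)"
  define P where "P = orth_proj W u"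
  have P: "P \<in> W" "u - P \<in> orthogonal_comp W"
    using orth_proj_props[OF W_sub W_fin] P_def by auto
  have Aeq: "A y (uy y) = f y" if "y \<in> Y" for y
    using A_bij[OF that] unfolding uy_def by (meson bij_is_surj surj_f_inv_f)
  have invf: "inv (blinfun_apply (A y)) (A y x) = x" if "y \<in> Y" for y x
    using A_bij[OF that] by (meson bij_is_inj inv_f_f)
  have inv_bound: "norm x \<le> (1/r) * norm (A y x)" if "y \<in> Y" for y x
  proof -
    have "norm x = norm (inv (blinfun_apply (A y)) (A y x))" using invf[OF that] by simp
    also have "\<dots> \<le> onorm (inv (blinfun_apply (A y))) * norm (A y x)"
      by (rule onorm[OF A_inv_bl[OF that]])
    also have "\<dots> \<le> (1/r) * norm (A y x)"
      by (rule mult_right_mono[OF A_inv_bound[OF that] norm_ge_zero])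
    finally show ?thesis .
  qed
  have fwd: "norm (A y x) \<le> R * norm x" if "y \<in> Y" for y x
    using norm_blinfun[of "A y" x] mult_right_mono[OF A_bound[OF that] norm_ge_zero[of x]]
    by linarith
  have em_nn: "0 \<le> eps_model" using u_close infdist_nonneg order_trans by blast
  have en_nn: "0 \<le> eps_noise" using eta_small norm_ge_zero order_trans by blast
  have Rpos: "0 < R" using r_pos rR by linarith
  have Rr: "1 \<le> R / r" using r_pos rR by simp
  have eps_ge: "eps_model + eps_noise \<le> \<epsilon>"
    unfolding \<epsilon>_def using mult_right_mono[OF Rr, of "eps_model + eps_noise"] em_nn en_nn by simp
  have Mne: "M \<noteq> {}" using ystar_Y M_def by blast
  define Rmin where "Rmin = norm (A ystar ustar - f ystar)"
  have cand: "(u + \<eta>) - w = u - P" using w_def P_def by simp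
  have Rmin_le: "Rmin \<le> R * (eps_model + eps_noise)"
  proof (rule field_le_epsilon)
    fix e :: real assume e: "0 < e"
    obtain m where m: "m \<in> M" "dist u m < eps_model + e / R"
      using infdist_approx[OF Mne, of u eps_model "e / R"] u_close e Rpos
      unfolding M_def uy_def by auto
    then obtain y0 where y0: "y0 \<in> Y" "m = uy y0" unfolding M_def by blast
    have "Rmin \<le> norm (A y0 (u + \<eta>) - f y0)"
      unfolding Rmin_def by (rule minimizer[OF _ y0(1)]) (simp add: cand P)
    also have "\<dots> = norm (A y0 (u + \<eta> - m))"
      using Aeq[OF y0(1)] y0(2) by (simp add: blinfun.diff_right)
    also have "\<dots> \<le> R * norm (u + \<eta> - m)" by (rule fwd[OF y0(1)])
    also have "\<dots> \<le> R * (dist u m + norm \<eta>)"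
    proof -
      have "norm (u + \<eta> - m) \<le> norm (u - m) + norm \<eta>"
        by (metis add_diff_eq diff_add_eq norm_triangle_ineq)
      then show ?thesis using Rpos by (simp add: dist_norm)
    qed
    also have "\<dots> \<le> R * (eps_model + e / R + eps_noise)"
      using m(2) eta_small Rpos by (intro mult_left_mono) auto
    also have "\<dots> = R * (eps_model + eps_noise) + e"
      using Rpos by (simp add: field_simps)
    finally show "Rmin \<le> R * (eps_model + eps_noise) + e" .
  qed
  have part1: "norm (ustar - uy ystar) \<le> \<epsilon>"
  proof -
    have "norm (ustar - uy ystar) \<le> (1/r) * norm (A ystar (ustar - uy ystar))"
      by (rule inv_bound[OF ystar_Y])
    also have "\<dots> = (1/r) * Rmin"
      unfolding Rmin_def using Aeq[OF ystar_Y] by (simp add: blinfun.diff_right)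
    also have "\<dots> \<le> (1/r) * (R * (eps_model + eps_noise))"
      using Rmin_le r_pos by (intro mult_left_mono) auto
    also have "\<dots> = \<epsilon>" unfolding \<epsilon>_def by simp
    finally show ?thesis .
  qed
  obtain K where K: "\<forall>y\<in>Y. norm (f y) \<le> K"
  proof -
    have "compact (f ` Y)" by (rule compact_continuous_image[OF f_cont Y_compact])
    then have "bounded (f ` Y)" by (rule compact_imp_bounded)
    then show ?thesis using that unfolding bounded_iff by blast
  qed
  have normM: "norm m \<le> K / r" if mM: "m \<in> M" for m
  proof -
    obtain y where y: "y \<in> Y" "m = uy y" using mM M_def by blast
    have "norm m \<le> (1/r) * norm (A y m)" by (rule inv_bound[OF y(1)])
    also have "\<dots> = (1/r) * norm (f y)" using Aeq[OF y(1)] y(2) by simp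
    also have "\<dots> \<le> (1/r) * K" using K y(1) r_pos by (intro mult_left_mono) auto
    finally show ?thesis by simp
  qed
  have nbhd_bound: "norm a \<le> K / r + \<sigma> + 1" if aN: "a \<in> nbhd_set M \<sigma>" for a \<sigma>
  proof -
    obtain m where m: "m \<in> M" "dist a m < \<sigma> + 1"
      using infdist_approx[OF Mne, of a \<sigma> 1] aN unfolding nbhd_set_def by auto
    have "norm a \<le> norm (a - m) + norm m" using norm_triangle_ineq[of "a - m" m] by simp
    then show ?thesis using m normM[OF m(1)] by (simp add: dist_norm)
  qed
  define S where "S \<sigma> = {norm (a - b) | a b. a \<in> nbhd_set M \<sigma> \<and> b \<in> nbhd_set M \<sigma>
                                    \<and> a - b \<in> orthogonal_comp W}" for \<sigma>
  have dS: "delta_sigma M W \<sigma> = Sup (S \<sigma>)" for \<sigma> unfolding delta_sigma_def S_def ..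
  have bdd: "bdd_above (S \<sigma>)" for \<sigma>
  proof (rule bdd_aboveI[of _ "(K / r + \<sigma> + 1) + (K / r + \<sigma> + 1)"])
    fix x assume "x \<in> S \<sigma>"
    then obtain a b where ab: "x = norm (a - b)" "a \<in> nbhd_set M \<sigma>" "b \<in> nbhd_set M \<sigma>"
      unfolding S_def by blast
    have "norm (a - b) \<le> norm a + norm b" by (rule norm_triangle_ineq4)
    then show "x \<le> (K / r + \<sigma> + 1) + (K / r + \<sigma> + 1)"
      using ab nbhd_bound[OF ab(2)] nbhd_bound[OF ab(3)] by linarith
  qed
  have le_delta: "norm (a - b) \<le> delta_sigma M W \<sigma>"
    if "a \<in> nbhd_set M \<sigma>" "b \<in> nbhd_set M \<sigma>" "a - b \<in> orthogonal_comp W" for a b \<sigma>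
    unfolding dS by (rule cSup_upper[OF _ bdd]) (use that S_def in blast)
  have Wsub: "subspace (orthogonal_comp W)" by (rule subspace_orthogonal_comp)
  have part2: "norm (u - ustar) \<le> eps_noise + delta_sigma M W \<epsilon>"
  proof -
    have v_in: "u + \<eta> \<in> nbhd_set M \<epsilon>"
    proof -
      have "infdist (u + \<eta>) M \<le> infdist u M + dist (u + \<eta>) u" by (rule infdist_triangle)
      also have "\<dots> \<le> eps_model + eps_noise"
        using u_close eta_small unfolding M_def uy_def by (simp add: dist_norm)
      finally show ?thesis using eps_ge unfolding nbhd_set_def by simp
    qed
    have us_in: "ustar \<in> nbhd_set M \<epsilon>"
      unfolding nbhd_set_def using infdist_le2[of "uy ystar" M ustar \<epsilon>] part1 ystar_Y M_def
      by (simp add: dist_norm)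
    have "(u + \<eta>) - ustar = (u - P) - (ustar - w)" using cand by (simp add: algebra_simps)
    then have "(u + \<eta>) - ustar \<in> orthogonal_comp W"
      using P(2) ustar_aff Wsub by (metis subspace_diff)
    then have d: "norm ((u + \<eta>) - ustar) \<le> delta_sigma M W \<epsilon>"
      by (rule le_delta[OF v_in us_in])
    have ee: "u - ustar = ((u + \<eta>) - ustar) - \<eta>" by simp
    have "norm (u - ustar) \<le> norm \<eta> + norm ((u + \<eta>) - ustar)"
      unfolding ee using norm_triangle_ineq4[of "(u + \<eta>) - ustar" \<eta>] by linarith
    then show ?thesis using d eta_small by linarith
  qed
  have part3: "eps_noise + delta_sigma M W \<epsilon> \<le> 2 * delta_sigma M W \<epsilon>"
  proof -
    obtain z where z: "z \<in> orthogonal_comp W" "z \<noteq> 0"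
      using W_perp_nontriv Wsub subspace_0 by blast
    define z' where "z' = (\<epsilon> / norm z) *\<^sub>R z"
    have eps_nn: "0 \<le> \<epsilon>" using eps_ge em_nn en_nn by linarith
    have nz': "norm z' = \<epsilon>" using z(2) eps_nn by (simp add: z'_def)
    have z'W: "z' \<in> orthogonal_comp W" using z(1) Wsub by (simp add: z'_def subspace_scale)
    have bM: "uy ystar \<in> M" using ystar_Y M_def by blast
    have a_in: "uy ystar + z' \<in> nbhd_set M \<epsilon>"
      unfolding nbhd_set_def using infdist_le2[OF bM, of "uy ystar + z'" \<epsilon>] nz'
      by (simp add: dist_norm)
    have b_in: "uy ystar \<in> nbhd_set M \<epsilon>"
      unfolding nbhd_set_def using bM eps_nn by simp
    have "norm ((uy ystar + z') - uy ystar) \<le> delta_sigma M W \<epsilon>"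
      by (rule le_delta[OF a_in b_in]) (simp add: z'W)
    then have "\<epsilon> \<le> delta_sigma M W \<epsilon>" using nz' by simp
    then show ?thesis using eps_ge em_nn by linarith
  qed
  have part4: "u \<in> M \<and> \<eta> = 0 \<longrightarrow> norm (u - ustar) \<le> delta_sigma M W 0"
  proof
    assume h: "u \<in> M \<and> \<eta> = 0"
    then obtain y0 where y0: "y0 \<in> Y" "u = uy y0" unfolding M_def by blast
    have wP: "w = P" using w_def P_def h by simp
    have "Rmin \<le> norm (A y0 u - f y0)"
      unfolding Rmin_def by (rule minimizer[OF _ y0(1)]) (simp add: wP P)
    also have "\<dots> = 0" using Aeq[OF y0(1)] y0(2) by simp
    finally have "A ystar ustar = f ystar" unfolding Rmin_def by simp
    then have "ustar = uy ystar" using invf[OF ystar_Y, of ustar] unfolding uy_def by simp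
    then have usM: "ustar \<in> M" using ystar_Y M_def by blast
    have "u - ustar = (u - P) - (ustar - w)" using wP by simp
    then have "u - ustar \<in> orthogonal_comp W"
      using P(2) ustar_aff Wsub by (metis subspace_diff)
    moreover have "u \<in> nbhd_set M 0" "ustar \<in> nbhd_set M 0"
      using h usM unfolding nbhd_set_def by auto
    ultimately show "norm (u - ustar) \<le> delta_sigma M W 0"
      by (rule le_delta[rotated 2])
  qed
  show ?thesis
    unfolding Let_def using part1 part2 part3 part4
    unfolding uy_def M_def \<epsilon>_def by blast
qed

end
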